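(* Let $X,Y$ be topological spaces and $f:X\to Y$ a function. Then $f$ is statistically continuous if and only if $f^{-1}(B)$ is statistically closed in $X$ for every statistically closed subset $B$ of $Y$.
   Context: For $A\subseteq\mathbb{N}$ let $d_n(A)=|A\cap\{1,\dots,n\}|/n$, $\overline{d}(A)=\limsup_n d_n(A)$, $\underline{d}(A)=\liminf_n d_n(A)$, and $d(A)$ their common value when equal. A sequence in $X$ is a map from an infinite subset $M\subseteq\mathbb{N}$ into $X$, written $(x_n)_{n\in M}$; a subsequence is $(x_n)_{n\in N}$ with $N\subseteq M$ infinite. It is nonthin if $\overline{d}(M)>0$. A nonthin sequence $(x_n)_{n\in M}$ is statistically convergent to $a\in X$ if for every open $U\ni a$, $d(\{n\in M:x_n\notin U\})=0$. The statistical closure $\overline{F}^{ST}$ of $F\subseteq X$ is the set of $x\in X$ such that some nonthin sequence in $F$ is statistically convergent to $x$; $F$ is statistically closed if $\overline{F}^{ST}=F$. A function $f:X\to Y$ is statistically continuous if whenever a nonthin sequence $(x_n)_{n\in K}$ in $X$ statistically converges to $x$, the sequence $(f(x_n))_{n\in K}$ statistically converges to $f(x)$. *)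

theory Defs
  imports "HOL-Analysis.Analysis" "HOL-Library.Liminf_Limsup"
begin

text \<open>Natural numbers of the paper are the positive naturals; d_n(A) = |A \<inter> {1..n}| / n.\<close>

definition dens_n :: "nat set \<Rightarrow> nat \<Rightarrow> real" where
  "dens_n A n = real (card (A \<inter> {1..n})) / real n"

definition upper_density :: "nat set \<Rightarrow> ereal" where
  "upper_density A = limsup (\<lambda>n. ereal (dens_n A n))"

definition density_zero :: "nat set \<Rightarrow> bool" where
  "density_zero A \<longleftrightarrow> (\<lambda>n. dens_n A n) \<longlonglongrightarrow> 0"

text \<open>A sequence is a map on an infinite index set M \<subseteq> {1,2,...}; it is nonthin if upper density of M is positive.\<close>
definition nonthin :: "nat set \<Rightarrow> bool" where
  "nonthin M \<longleftrightarrow> M \<subseteq> {1..} \<and> infinite M \<and> upper_density M > 0"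

definition stat_conv :: "nat set \<Rightarrow> (nat \<Rightarrow> 'a::topological_space) \<Rightarrow> 'a \<Rightarrow> bool" where
  "stat_conv M x a \<longleftrightarrow> nonthin M \<and>
     (\<forall>U. open U \<and> a \<in> U \<longrightarrow> density_zero {n \<in> M. x n \<notin> U})"

definition stat_closure :: "'a::topological_space set \<Rightarrow> 'a set" where
  "stat_closure F = {a. \<exists>M x. nonthin M \<and> (\<forall>n\<in>M. x n \<in> F) \<and> stat_conv M x a}"

definition stat_closed :: "'a::topological_space set \<Rightarrow> bool" where
  "stat_closed F \<longleftrightarrow> stat_closure F = F"

definition stat_continuous :: "('a::topological_space \<Rightarrow> 'b::topological_space) \<Rightarrow> bool" where
  "stat_continuous f \<longleftrightarrow>
     (\<forall>M x a. stat_conv M x a \<longrightarrow> stat_conv M (\<lambda>n. f (x n)) (f a))"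

end

theory Submission
  imports Defs
begin

lemma dens_nonneg: "dens_n A n \<ge> 0"
  by (simp add: dens_n_def)

lemma density_zero_iff_ud: "density_zero A \<longleftrightarrow> upper_density A = 0"
proof
  assume "density_zero A"
  hence "(\<lambda>n. ereal (dens_n A n)) \<longlonglongrightarrow> ereal 0"
    unfolding density_zero_def by (rule tendsto_ereal)
  hence "limsup (\<lambda>n. ereal (dens_n A n)) = ereal 0"
    by (intro lim_imp_Limsup) simp_all
  thus "upper_density A = 0" unfolding upper_density_def by (simp add: zero_ereal_def)
next
  assume h: "upper_density A = 0"
  have "liminf (\<lambda>n. ereal (dens_n A n)) \<ge> 0"
    by (rule Liminf_bounded) (simp add: dens_nonneg)
  moreover have "liminf (\<lambda>n. ereal (dens_n A n)) \<le> limsup (\<lambda>n. ereal (dens_n A n))"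
    by (rule Liminf_le_Limsup) simp
  ultimately have "liminf (\<lambda>n. ereal (dens_n A n)) = 0"
    using h unfolding upper_density_def by simp
  hence "(\<lambda>n. ereal (dens_n A n)) \<longlonglongrightarrow> 0"
    using h unfolding upper_density_def by (intro Liminf_eq_Limsup) auto
  hence "(\<lambda>n. ereal (dens_n A n)) \<longlonglongrightarrow> ereal 0" by (simp add: zero_ereal_def)
  thus "density_zero A" unfolding density_zero_def
    using lim_ereal by blast
qed

lemma ud_nonneg: "upper_density A \<ge> 0"
proof -
  have "liminf (\<lambda>n. ereal (dens_n A n)) \<ge> 0"
    by (rule Liminf_bounded) (simp add: dens_nonneg)
  moreover have "liminf (\<lambda>n. ereal (dens_n A n)) \<le> limsup (\<lambda>n. ereal (dens_n A n))"
    by (rule Liminf_le_Limsup) simp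
  ultimately show ?thesis unfolding upper_density_def by simp
qed

lemma density_zero_subset: "density_zero A \<Longrightarrow> B \<subseteq> A \<Longrightarrow> density_zero B"
proof -
  assume a: "density_zero A" and s: "B \<subseteq> A"
  have le: "\<And>n. dens_n B n \<le> dens_n A n"
    unfolding dens_n_def
    using s by (intro divide_right_mono of_nat_mono card_mono) auto
  moreover have "\<And>n. 0 \<le> dens_n B n" by (rule dens_nonneg)
  note h = this
  show ?thesis unfolding density_zero_def
    apply (rule tendsto_sandwich[of "\<lambda>_. 0" _ _ "\<lambda>n. dens_n A n"])
    using h a le unfolding density_zero_def by auto
qed

lemma finite_density_zero: "finite A \<Longrightarrow> density_zero A"
proof -
  assume f: "finite A"
  have le: "\<And>n. dens_n A n \<le> real (card A) / real n"
    unfolding dens_n_def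
    using f by (intro divide_right_mono of_nat_mono card_mono) auto
  moreover have "(\<lambda>n. real (card A) / real n) \<longlonglongrightarrow> 0"
    by (rule lim_const_over_n)
  note h = this
  show ?thesis unfolding density_zero_def
    apply (rule tendsto_sandwich[of "\<lambda>_. 0" _ _ "\<lambda>n. real (card A) / real n"])
    using h le by (auto simp: dens_nonneg)
qed

lemma nonthin_of_not_dz: "A \<subseteq> {1..} \<Longrightarrow> \<not> density_zero A \<Longrightarrow> nonthin A"
  unfolding nonthin_def using finite_density_zero density_zero_iff_ud ud_nonneg
  by (metis order_less_le)

lemma nonthin_not_dz: "nonthin M \<Longrightarrow> \<not> density_zero M"
  unfolding nonthin_def using density_zero_iff_ud by auto

lemma nonthin_UNIV1: "nonthin {1..}"
proof -
  have ev: "eventually (\<lambda>n. ereal (dens_n {1..} n) = 1) sequentially"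
    unfolding eventually_sequentially
    by (rule exI[of _ 1]) (auto simp: dens_n_def)
  have "(\<lambda>n. ereal (dens_n {1..} n)) \<longlonglongrightarrow> 1"
    by (rule tendsto_eventually[OF ev])
  hence "limsup (\<lambda>n. ereal (dens_n {1..} n)) = 1"
    by (intro lim_imp_Limsup) simp_all
  hence "upper_density {1..} = 1" unfolding upper_density_def by simp
  moreover have "infinite {1::nat..}" by (simp add: infinite_Ici)
  ultimately show ?thesis unfolding nonthin_def by simp
qed

lemma subset_stat_closure: "F \<subseteq> stat_closure F"
proof
  fix a assume "a \<in> F"
  have "stat_conv {1..} (\<lambda>_. a) a"
    unfolding stat_conv_def using nonthin_UNIV1 finite_density_zero by auto
  thus "a \<in> stat_closure F" unfolding stat_closure_def
    using nonthin_UNIV1 \<open>a \<in> F\<close> by (intro CollectI exI[of _ "{1..}"] exI[of _ "\<lambda>_. a"]) simp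
qed

lemma closed_stat_closed: "closed C \<Longrightarrow> stat_closed C"
proof -
  assume c: "closed C"
  have "stat_closure C \<subseteq> C"
  proof
    fix b assume "b \<in> stat_closure C"
    then obtain M x where M: "nonthin M" "\<forall>n\<in>M. x n \<in> C" "stat_conv M x b"
      unfolding stat_closure_def by blast
    show "b \<in> C"
    proof (rule ccontr)
      assume "b \<notin> C"
      hence "density_zero {n \<in> M. x n \<notin> - C}"
        using M(3) c unfolding stat_conv_def by (auto simp: open_Compl)
      moreover have "{n \<in> M. x n \<notin> - C} = M" using M(2) by auto
      ultimately show False using nonthin_not_dz[OF M(1)] by simp
    qed
  qed
  thus ?thesis unfolding stat_closed_def using subset_stat_closure by blast
qed

theorem mainTheorem2:
  fixes f :: "'a::topological_space \<Rightarrow> 'b::topological_space"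
  shows "stat_continuous f \<longleftrightarrow> (\<forall>B::'b set. stat_closed B \<longrightarrow> stat_closed (f -` B))"
proof
  assume sc: "stat_continuous f"
  show "\<forall>B::'b set. stat_closed B \<longrightarrow> stat_closed (f -` B)"
  proof (intro allI impI)
    fix B :: "'b set" assume B: "stat_closed B"
    have "stat_closure (f -` B) \<subseteq> f -` B"
    proof
      fix a assume "a \<in> stat_closure (f -` B)"
      then obtain M x where M: "nonthin M" "\<forall>n\<in>M. x n \<in> f -` B" "stat_conv M x a"
        unfolding stat_closure_def by blast
      have "stat_conv M (\<lambda>n. f (x n)) (f a)" using sc M(3) unfolding stat_continuous_def by blast
      hence "f a \<in> stat_closure B" unfolding stat_closure_def using M
        by (intro CollectI exI[of _ M] exI[of _ "\<lambda>n. f (x n)"]) simp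
      thus "a \<in> f -` B" using B unfolding stat_closed_def by simp
    qed
    thus "stat_closed (f -` B)" unfolding stat_closed_def
      using subset_stat_closure[of "f -` B"] by (rule equalityI)
  qed
next
  assume h: "\<forall>B::'b set. stat_closed B \<longrightarrow> stat_closed (f -` B)"
  show "stat_continuous f" unfolding stat_continuous_def
  proof (intro allI impI)
    fix M :: "nat set" and x :: "nat \<Rightarrow> 'a" and a :: 'a
    assume sa: "stat_conv M x a"
    have nM: "nonthin M" using sa unfolding stat_conv_def by blast
    have "\<forall>V. open V \<and> f a \<in> V \<longrightarrow> density_zero {n \<in> M. f (x n) \<notin> V}"
    proof (intro allI impI)
      fix V assume V: "open V \<and> f a \<in> V"
      show "density_zero {n \<in> M. f (x n) \<notin> V}"
      proof (rule ccontr)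
        define K where "K = {n \<in> M. f (x n) \<notin> V}"
        assume "\<not> density_zero {n \<in> M. f (x n) \<notin> V}"
        have K1: "K \<subseteq> {1..}" using nM unfolding nonthin_def K_def by blast
        have nK: "nonthin K"
          by (rule nonthin_of_not_dz[OF K1]) (simp only: K_def, fact)
        have "stat_conv K x a" unfolding stat_conv_def
        proof (intro conjI allI impI nK)
          fix U assume "open U \<and> a \<in> U"
          hence "density_zero {n \<in> M. x n \<notin> U}" using sa unfolding stat_conv_def by blast
          thus "density_zero {n \<in> K. x n \<notin> U}"
            by (rule density_zero_subset) (auto simp: K_def)
        qed
        moreover have "\<forall>n\<in>K. x n \<in> f -` (- V)" by (auto simp: K_def)
        ultimately have "a \<in> stat_closure (f -` (- V))"
          unfolding stat_closure_def using nK by (intro CollectI exI[of _ K] exI[of _ x]) simp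
        moreover have "stat_closed (f -` (- V))"
        proof -
          have "closed (- V)" using V by (simp add: closed_Compl)
          hence "stat_closed (- V)" by (rule closed_stat_closed)
          thus ?thesis using h by blast
        qed
        ultimately have "a \<in> f -` (- V)" unfolding stat_closed_def by simp
        thus False using V by simp
      qed
    qed
    thus "stat_conv M (\<lambda>n. f (x n)) (f a)" unfolding stat_conv_def using nM by blast
  qed
qed

end
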